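(* Let $c\ge2$, $q\in[0,c-1]$, and let $\Gamma$ be a $c$-uniform unoriented hypergraph with $E\ne\varnothing$ and no isolated vertices, with smallest normalized Laplacian eigenvalue $\lambda_1$ and with $\chi^{q\text{-t}}=\chi^{q\text{-t}}(\Gamma)\ge2$. If $\chi^{q\text{-t}}=\dfrac{c-\lambda_1}{q+1-\lambda_1}$, then for every $q$-tailored $\chi^{q\text{-t}}$-coloring with color classes $V_1,\dots,V_{\chi^{q\text{-t}}}$: for every $i$ and every $v\in V_i$, $\sum_{w\in V_i}|A_{v,w}|=q\deg v$; and for all distinct $i,j$, the function $g_{ij}$ is an eigenfunction of $L$ with eigenvalue \[ \lambda_1=\frac{(q+1)\chi^{q\text{-t}}-c}{\chi^{q\text{-t}}-1}. \]
   Context: A hypergraph has finite vertex set $V$ and edge set $E\subseteq\mathcal P(V)$; it is $c$-uniform if $|e|=c$ for all $e$, and unoriented means all incidences have orientation $+1$. $\deg v=|\{e\in E: v\in e\}|\ge1$, $D=\mathrm{diag}(\deg v)$, adjacency $A_{v,v}=0$ and $A_{v,w}=-|\{e\in E: v,w\in e\}|$ for $v\ne w$, normalized Laplacian $L=\mathrm{Id}-D^{-1}A$ with eigenvalues $\lambda_1\le\dots\le\lambda_N$. For $q\in[0,c-1]$, a $k$-coloring with color classes $V_1,\dots,V_k$ is $q$-tailored if for all $i$ and all $v\in V_i$, $\sum_{w\in V_i}|A_{v,w}|\le q\deg v$; $\chi^{q\text{-t}}$ is the least $k$ admitting one. For color classes and distinct $i,j$, $g_{ij}(w)=1$ if $w\in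 V_i$, $-1$ if $w\in V_j$, $0$ otherwise. *)

theory Defs
  imports Complex_Main
begin

(* A hypergraph is given by a vertex set V :: 'a set and an edge set E :: 'a set set.
   Unoriented: all incidences have orientation +1, so edges are just vertex sets. *)

definition hdeg :: "'a set set \<Rightarrow> 'a \<Rightarrow> nat" where
  "hdeg E v = card {e \<in> E. v \<in> e}"

definition hadj :: "'a set set \<Rightarrow> 'a \<Rightarrow> 'a \<Rightarrow> real" where
  "hadj E v w = (if v = w then 0 else - real (card {e \<in> E. v \<in> e \<and> w \<in> e}))"

definition nlap :: "'a set \<Rightarrow> 'a set set \<Rightarrow> ('a \<Rightarrow> real) \<Rightarrow> 'a \<Rightarrow> real" where
  "nlap V E f v = f v - (\<Sum>w\<in>V. hadj E v w * f w) / real (hdeg E v)"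

definition is_eigenfunction :: "'a set \<Rightarrow> 'a set set \<Rightarrow> ('a \<Rightarrow> real) \<Rightarrow> real \<Rightarrow> bool" where
  "is_eigenfunction V E f \<mu> \<longleftrightarrow> (\<exists>v\<in>V. f v \<noteq> 0) \<and> (\<forall>v\<in>V. nlap V E f v = \<mu> * f v)"

definition is_eigenvalue :: "'a set \<Rightarrow> 'a set set \<Rightarrow> real \<Rightarrow> bool" where
  "is_eigenvalue V E \<mu> \<longleftrightarrow> (\<exists>f. is_eigenfunction V E f \<mu>)"

(* smallest eigenvalue lambda_1 of L (all eigenvalues of L are real) *)
definition lambda1 :: "'a set \<Rightarrow> 'a set set \<Rightarrow> real" where
  "lambda1 V E = Min {\<mu>. is_eigenvalue V E \<mu>}"

definition is_coloring :: "'a set \<Rightarrow> nat \<Rightarrow> ('a \<Rightarrow> nat) \<Rightarrow> bool" where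
  "is_coloring V k col \<longleftrightarrow> (\<forall>v\<in>V. col v < k)"

definition color_class :: "'a set \<Rightarrow> ('a \<Rightarrow> nat) \<Rightarrow> nat \<Rightarrow> 'a set" where
  "color_class V col i = {v \<in> V. col v = i}"

definition q_tailored :: "'a set \<Rightarrow> 'a set set \<Rightarrow> real \<Rightarrow> nat \<Rightarrow> ('a \<Rightarrow> nat) \<Rightarrow> bool" where
  "q_tailored V E q k col \<longleftrightarrow> is_coloring V k col \<and>
     (\<forall>i<k. \<forall>v\<in>color_class V col i.
        (\<Sum>w\<in>color_class V col i. \<bar>hadj E v w\<bar>) \<le> q * real (hdeg E v))"

definition chi_qt :: "'a set \<Rightarrow> 'a set set \<Rightarrow> real \<Rightarrow> nat" where
  "chi_qt V E q = (LEAST k. \<exists>col. q_tailored V E q k col)"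

definition gfun :: "'a set \<Rightarrow> ('a \<Rightarrow> nat) \<Rightarrow> nat \<Rightarrow> nat \<Rightarrow> 'a \<Rightarrow> real" where
  "gfun V col i j w = (if w \<in> color_class V col i then 1
                       else if w \<in> color_class V col j then -1 else 0)"

end

theory Submission
  imports Defs "HOL-Analysis.Analysis" "Jordan_Normal_Form.Char_Poly"
begin

lemma dsum_out: "(\<Sum>v\<in>A. \<Sum>w\<in>B. if v = u then F v w else 0) = (\<Sum>v\<in>A. if v = u then (\<Sum>w\<in>B. F v w) else 0)"
  by (rule sum.cong) auto

lemma dsum_mult: "finite A \<Longrightarrow> (\<Sum>w\<in>A. (if v = w then d else 0) * (y w :: real)) = (if v \<in> A then d * y v else 0)"
proof -
  have "(\<Sum>w\<in>A. (if v = w then d else 0) * y w) = (\<Sum>w\<in>A. if v = w then d * y w else 0)" by (rule sum.cong) auto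
  moreover assume "finite A"
  ultimately show ?thesis by simp
qed

lemma sum_if_card: "finite A \<Longrightarrow> (\<Sum>e\<in>A. if P e then x else 0) = real (card {e\<in>A. P e}) * (x::real)"
  by (simp add: sum.inter_filter[symmetric])

lemma quad_min:
  fixes K :: "'a \<Rightarrow> 'a \<Rightarrow> real" and g :: "'a \<Rightarrow> real"
  assumes fin: "finite V" and sym: "\<And>v w. K v w = K w v"
   and nonneg: "\<And>f. 0 \<le> (\<Sum>v\<in>V. \<Sum>w\<in>V. K v w * f v * f w)"
   and zero: "(\<Sum>v\<in>V. \<Sum>w\<in>V. K v w * g v * g w) = 0"
   and u: "u \<in> V"
  shows "(\<Sum>w\<in>V. K u w * g w) = 0"
proof -
  define b where "b = (\<Sum>w\<in>V. K u w * g w)"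
  define a where "a = K u u"
  have expand: "(\<Sum>v\<in>V. \<Sum>w\<in>V. K v w * (g v + t * (if v = u then 1 else 0)) * (g w + t * (if w = u then 1 else 0)))
      = 2 * t * b + t^2 * a" for t
  proof -
    have e: "K v w * (g v + t * (if v = u then 1 else 0)) * (g w + t * (if w = u then 1 else 0))
       = K v w * g v * g w + t * (if v = u then K v w * g w else 0) + t * (if w = u then K v w * g v else 0)
         + t^2 * (if v = u \<and> w = u then K v w else 0)" for v w
      by (auto simp: algebra_simps power2_eq_square)
    have "(\<Sum>v\<in>V. \<Sum>w\<in>V. K v w * (g v + t * (if v = u then 1 else 0)) * (g w + t * (if w = u then 1 else 0)))
      = (\<Sum>v\<in>V. \<Sum>w\<in>V. K v w * g v * g w) + t * (\<Sum>v\<in>V. \<Sum>w\<in>V. (if v = u then K v w * g w else 0))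
        + t * (\<Sum>v\<in>V. \<Sum>w\<in>V. (if w = u then K v w * g v else 0))
        + t^2 * (\<Sum>v\<in>V. \<Sum>w\<in>V. (if v = u \<and> w = u then K v w else 0))"
      unfolding e by (simp add: sum.distrib sum_distrib_left)
    also have "(\<Sum>v\<in>V. \<Sum>w\<in>V. (if v = u then K v w * g w else 0)) = b"
      unfolding dsum_out using fin u by (simp add: b_def)
    also have "(\<Sum>v\<in>V. \<Sum>w\<in>V. (if w = u then K v w * g v else 0)) = b"
      using fin u by (simp add: b_def sym mult.commute)
    also have "(\<Sum>v\<in>V. \<Sum>w\<in>V. (if v = u \<and> w = u then K v w else 0)) = a"
    proof -
      have "(\<Sum>v\<in>V. \<Sum>w\<in>V. (if v = u \<and> w = u then K v w else 0)) = (\<Sum>v\<in>V. \<Sum>w\<in>V. (if v = u then (if w = u then K v w else 0) else 0))"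
        by (intro sum.cong) auto
      then show ?thesis unfolding dsum_out using fin u by (simp add: a_def)
    qed
    finally show ?thesis using zero by simp
  qed
  have ineq: "0 \<le> 2 * t * b + t^2 * a" for t
    using nonneg[of "\<lambda>v. g v + t * (if v = u then 1 else 0)"] expand[of t] by simp
  define s where "s = \<bar>a\<bar> + 1"
  have s: "s > 0" by (simp add: s_def add_pos_nonneg)
  have "0 \<le> s^2 * (2 * (- b / s) * b + (- b / s)^2 * a)"
    using ineq[of "- b / s"] by simp
  also have "s^2 * (2 * (- b / s) * b + (- b / s)^2 * a) = b^2 * (a - 2 * s)"
    using s by (simp add: field_simps power2_eq_square)
  finally have "0 \<le> b^2 * (a - 2 * s)" .
  moreover have "a - 2 * s < 0" unfolding s_def by (simp add: abs_if)
  ultimately have "\<not> b^2 > 0"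
    using mult_pos_neg[of "b^2" "a - 2 * s"] by linarith
  then have "b^2 = 0" using zero_le_power2[of b] by linarith
  then show ?thesis unfolding b_def by simp
qed

locale hg =
  fixes V :: "'a set" and E :: "'a set set" and c :: nat
  assumes finV: "finite V" and edges: "\<forall>e\<in>E. e \<subseteq> V \<and> card e = c"
    and degs: "\<forall>v\<in>V. hdeg E v \<ge> 1"
begin

definition W :: "'a \<Rightarrow> 'a \<Rightarrow> real" where "W v w = real (card {e\<in>E. v\<in>e \<and> w\<in>e})"
definition Qf :: "('a \<Rightarrow> real) \<Rightarrow> real" where "Qf f = (\<Sum>e\<in>E. (\<Sum>v\<in>e. f v)^2)"
definition Nf :: "('a \<Rightarrow> real) \<Rightarrow> real" where "Nf f = (\<Sum>v\<in>V. real (hdeg E v) * (f v)^2)"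

lemma finE: "finite E"
proof -
  have "E \<subseteq> Pow V" using edges by auto
  then show ?thesis using finV by (meson finite_Pow_iff finite_subset)
qed

lemma W_sym: "W v w = W w v" unfolding W_def by (simp add: conj_commute)

lemma W_diag: "W v v = real (hdeg E v)" unfolding W_def hdeg_def by simp

lemma hadj_W: "v \<noteq> w \<Longrightarrow> hadj E v w = - W v w" unfolding hadj_def W_def by simp

lemma sum_edge: assumes "e \<in> E" shows "(\<Sum>v\<in>e. f v) = (\<Sum>v\<in>V. if v \<in> e then f v else 0)"
proof -
  have "{v\<in>V. v \<in> e} = e" using edges assms by auto
  then show ?thesis using sum.inter_filter[OF finV, of f "\<lambda>v. v \<in> e"] by simp
qed

lemma bilin: "(\<Sum>e\<in>E. (\<Sum>v\<in>e. f v) * (\<Sum>w\<in>e. h w)) = (\<Sum>v\<in>V. \<Sum>w\<in>V. W v w * f v * h w)"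
proof -
  have "(\<Sum>e\<in>E. (\<Sum>v\<in>e. f v) * (\<Sum>w\<in>e. h w)) = (\<Sum>e\<in>E. \<Sum>v\<in>V. \<Sum>w\<in>V. (if v\<in>e \<and> w\<in>e then f v * h w else 0))"
  proof (rule sum.cong[OF refl])
    fix e assume e: "e \<in> E"
    show "(\<Sum>v\<in>e. f v) * (\<Sum>w\<in>e. h w) = (\<Sum>v\<in>V. \<Sum>w\<in>V. (if v\<in>e \<and> w\<in>e then f v * h w else 0))"
      unfolding sum_edge[OF e, of f] sum_edge[OF e, of h] sum_product by (auto intro!: sum.cong)
  qed
  also have "\<dots> = (\<Sum>v\<in>V. \<Sum>w\<in>V. \<Sum>e\<in>E. (if v\<in>e \<and> w\<in>e then f v * h w else 0))"
    by (subst sum.swap) (simp add: sum.swap[of _ E])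
  also have "\<dots> = (\<Sum>v\<in>V. \<Sum>w\<in>V. W v w * f v * h w)"
    unfolding W_def using finE by (simp add: sum_if_card mult.assoc)
  finally show ?thesis .
qed

lemma Qf_bilin: "Qf f = (\<Sum>v\<in>V. \<Sum>w\<in>V. W v w * f v * f w)"
  unfolding Qf_def bilin[symmetric] by (simp add: power2_eq_square)

lemma Nf_bilin: "Nf f = (\<Sum>v\<in>V. \<Sum>w\<in>V. (if v = w then real (hdeg E v) else 0) * f v * f w)"
  unfolding Nf_def using finV by (simp add: power2_eq_square dsum_mult mult.assoc)

lemma Qf_nonneg: "0 \<le> Qf f" unfolding Qf_def by (simp add: sum_nonneg)

lemma Nf_nonneg: "0 \<le> Nf f" unfolding Nf_def by (simp add: sum_nonneg)

lemma deg_pos: "v \<in> V \<Longrightarrow> real (hdeg E v) > 0" using degs by fastforce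

lemma deg_nlap: assumes v: "v \<in> V"
  shows "real (hdeg E v) * nlap V E f v = (\<Sum>w\<in>V. W v w * f w)"
proof -
  have d: "real (hdeg E v) \<noteq> 0" using deg_pos[OF v] by simp
  have "(\<Sum>w\<in>V. W v w * f w) = W v v * f v + (\<Sum>w\<in>V-{v}. W v w * f w)"
    using sum.remove[OF finV v] by simp
  moreover have "(\<Sum>w\<in>V. hadj E v w * f w) = (\<Sum>w\<in>V-{v}. - (W v w * f w))"
  proof -
    have "(\<Sum>w\<in>V-{v}. hadj E v w * f w) = (\<Sum>w\<in>V-{v}. - (W v w * f w))"
      by (rule sum.cong) (auto simp: hadj_W)
    then show ?thesis using sum.remove[OF finV v, of "\<lambda>w. hadj E v w * f w"] by (simp add: hadj_def[of E v v])
  qed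
  ultimately show ?thesis
    unfolding nlap_def using d by (simp add: field_simps W_diag sum_negf)
qed

lemma eig_from_min:
  assumes all: "\<And>h. \<mu> * Nf h \<le> Qf h" and g: "\<mu> * Nf g = Qf g" and v: "v \<in> V"
  shows "nlap V E g v = \<mu> * g v"
proof -
  define K where "K v w = W v w - \<mu> * (if v = w then real (hdeg E v) else 0)" for v w
  have P: "(\<Sum>v\<in>V. \<Sum>w\<in>V. K v w * f v * f w) = Qf f - \<mu> * Nf f" for f
    unfolding Qf_bilin Nf_bilin K_def
    by (simp add: sum_subtractf sum_distrib_left left_diff_distrib mult.assoc)
  have "(\<Sum>w\<in>V. K v w * g w) = 0"
    apply (rule quad_min[OF finV _ _ _ v])
    using W_sym all g P by (auto simp: K_def)
  moreover have "(\<Sum>w\<in>V. \<mu> * ((if v = w then real (hdeg E v) else 0) * g w)) = \<mu> * (\<Sum>w\<in>V. (if v = w then real (hdeg E v) else 0) * g w)"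
    by (simp add: sum_distrib_left)
  ultimately have "(\<Sum>w\<in>V. W v w * g w) = \<mu> * real (hdeg E v) * g v"
    unfolding K_def using finV v by (simp add: left_diff_distrib sum_subtractf mult.assoc dsum_mult)
  then have "real (hdeg E v) * nlap V E g v = real (hdeg E v) * (\<mu> * g v)"
    using deg_nlap[OF v] by simp
  then show ?thesis using deg_pos[OF v] by simp
qed

end
context hg begin

lemma fin_eig: "finite {\<mu>. is_eigenvalue V E \<mu>}"
proof -
  define n where "n = card V"
  obtain \<sigma> where bij: "bij_betw \<sigma> {0..<n} V" using ex_bij_betw_nat_finite[OF finV] n_def by blast
  define A :: "real mat" where "A = mat n n (\<lambda>(i,j). (if i = j then 1 else 0) - hadj E (\<sigma> i) (\<sigma> j) / real (hdeg E (\<sigma> i)))"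
  have A: "A \<in> carrier_mat n n" by (simp add: A_def)
  have "{\<mu>. is_eigenvalue V E \<mu>} \<subseteq> {x. poly (char_poly A) x = 0}"
  proof
    fix \<mu> assume "\<mu> \<in> {\<mu>. is_eigenvalue V E \<mu>}"
    then obtain f where ev: "is_eigenfunction V E f \<mu>" by (auto simp: is_eigenvalue_def)
    define x where "x = vec n (\<lambda>i. f (\<sigma> i))"
    have "eigenvector A x \<mu>"
      unfolding eigenvector_def
    proof (intro conjI)
      show "x \<in> carrier_vec (dim_row A)" using A by (simp add: x_def)
      from ev obtain v where v: "v\<in>V" "f v \<noteq> 0" by (auto simp: is_eigenfunction_def)
      then obtain i where i: "i < n" "\<sigma> i = v" using bij unfolding bij_betw_def by auto
      have "x $ i \<noteq> 0" using i v by (simp add: x_def)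
      then show "x \<noteq> 0\<^sub>v (dim_row A)" using i A by auto
      show "A *\<^sub>v x = \<mu> \<cdot>\<^sub>v x"
      proof (rule eq_vecI)
        fix i assume i: "i < dim_vec (\<mu> \<cdot>\<^sub>v x)"
        then have i: "i < n" by (simp add: x_def)
        have si: "\<sigma> i \<in> V" using bij i unfolding bij_betw_def by auto
        have "(A *\<^sub>v x) $ i = (\<Sum>j=0..<n. A $$ (i,j) * x $ j)"
          using A i by (simp add: scalar_prod_def x_def)
        also have "\<dots> = (\<Sum>j=0..<n. ((if i = j then 1 else 0) - hadj E (\<sigma> i) (\<sigma> j) / real (hdeg E (\<sigma> i))) * f (\<sigma> j))"
          using i by (intro sum.cong) (auto simp: A_def x_def)
        also have "\<dots> = f (\<sigma> i) - (\<Sum>j=0..<n. hadj E (\<sigma> i) (\<sigma> j) * f (\<sigma> j)) / real (hdeg E (\<sigma> i))"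
          using i by (simp add: left_diff_distrib sum_subtractf sum_divide_distrib dsum_mult)
        also have "(\<Sum>j=0..<n. hadj E (\<sigma> i) (\<sigma> j) * f (\<sigma> j)) = (\<Sum>w\<in>V. hadj E (\<sigma> i) w * f w)"
          using sum.reindex_bij_betw[OF bij, of "\<lambda>w. hadj E (\<sigma> i) w * f w"] by simp
        also have "f (\<sigma> i) - (\<Sum>w\<in>V. hadj E (\<sigma> i) w * f w) / real (hdeg E (\<sigma> i)) = nlap V E f (\<sigma> i)"
          by (simp add: nlap_def)
        also have "\<dots> = \<mu> * f (\<sigma> i)" using ev si by (simp add: is_eigenfunction_def)
        finally show "(A *\<^sub>v x) $ i = (\<mu> \<cdot>\<^sub>v x) $ i" using i by (simp add: x_def)
      qed (simp add: A_def x_def)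
    qed
    then have "eigenvalue A \<mu>" by (auto simp: eigenvalue_def)
    then show "\<mu> \<in> {x. poly (char_poly A) x = 0}" using eigenvalue_root_char_poly[OF A] by simp
  qed
  moreover have "char_poly A \<noteq> 0" using degree_monic_char_poly[OF A] by auto
  ultimately show ?thesis using poly_roots_finite finite_subset by blast
qed

lemma Qf_cong: "(\<And>v. v \<in> V \<Longrightarrow> f v = g v) \<Longrightarrow> Qf f = Qf g"
  unfolding Qf_def using edges by (intro sum.cong refl arg_cong[where f="\<lambda>x. x^2"]) auto

lemma exists_min:
  assumes Vne: "V \<noteq> {}"
  shows "\<exists>f0. Nf f0 = 1 \<and> (\<forall>h. Qf f0 * Nf h \<le> Qf h)"
proof -
  define B where "B = PiE UNIV (\<lambda>v. if v \<in> V then {-1..1::real} else {0})"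
  define S where "S = B \<inter> {f. Nf f = 1}"
  have "compactin (product_topology (\<lambda>_. euclidean) UNIV) B"
    unfolding B_def compactin_PiE by (auto simp: compactin_euclidean_iff)
  then have cB: "compact B" by (simp add: euclidean_product_topology compactin_euclidean_iff)
  have contN: "continuous_on UNIV Nf"
    unfolding Nf_def by (intro continuous_intros continuous_on_product_coordinates)
  have contQ: "continuous_on UNIV Qf"
    unfolding Qf_def by (intro continuous_intros continuous_on_product_coordinates)
  have cS: "compact S" unfolding S_def
    by (intro compact_Int_closed cB closed_Collect_eq contN continuous_on_const)
  obtain v0 where v0: "v0 \<in> V" using Vne by auto
  have d0: "real (hdeg E v0) \<ge> 1" using degs v0 by auto
  define t where "t = 1 / sqrt (real (hdeg E v0))"
  define f1 where "f1 w = (if w = v0 then t else 0)" for w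
  have "Nf f1 = (\<Sum>v\<in>V. if v = v0 then real (hdeg E v0) * t^2 else 0)"
    unfolding Nf_def f1_def by (rule sum.cong) auto
  also have "\<dots> = real (hdeg E v0) * t^2"
    using finV v0 by simp
  also have "\<dots> = 1" using d0 by (simp add: t_def power_divide)
  finally have N1: "Nf f1 = 1" .
  have s1: "sqrt (real (hdeg E v0)) \<ge> 1" using d0 by simp
  then have "t \<le> 1" "0 \<le> t"
    by (auto simp: divide_le_eq t_def)
  then have "f1 \<in> S" unfolding S_def B_def using N1 v0 by (auto simp: f1_def)
  then have Sne: "S \<noteq> {}" by auto
  obtain f0 where f0: "f0 \<in> S" and min: "\<And>y. y \<in> S \<Longrightarrow> Qf f0 \<le> Qf y"
    using continuous_attains_inf[OF cS Sne continuous_on_subset[OF contQ]] by blast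
  have "Qf f0 * Nf h \<le> Qf h" for h
  proof (cases "Nf h = 0")
    case True then show ?thesis using Qf_nonneg[of h] by simp
  next
    case False
    then have Np: "Nf h > 0" using Nf_nonneg[of h] by simp
    define r where "r = sqrt (Nf h)"
    have r: "r > 0" "r^2 = Nf h" using Np by (auto simp: r_def)
    define h' where "h' w = (if w \<in> V then h w / r else 0)" for w
    have Nh': "Nf h' = 1"
    proof -
      have "Nf h' = (\<Sum>v\<in>V. real (hdeg E v) * (h v)^2) / r^2"
        unfolding Nf_def h'_def by (simp add: sum_divide_distrib power_divide)
      then show ?thesis using r Np by (simp add: Nf_def[symmetric])
    qed
    have Qh': "Qf h' = Qf h / r^2"
    proof -
      have "Qf h' = Qf (\<lambda>w. h w / r)" by (rule Qf_cong) (simp add: h'_def)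
      also have "\<dots> = Qf h / r^2" unfolding Qf_def
        by (simp add: sum_divide_distrib[symmetric] power_divide)
      finally show ?thesis .
    qed
    have "h' \<in> B" unfolding B_def
    proof (auto simp: h'_def)
      fix v assume v: "v \<in> V"
      have "real (hdeg E v) * (h' v)^2 \<le> Nf h'"
        unfolding Nf_def using finV v by (intro member_le_sum) auto
      moreover have "1 * (h' v)^2 \<le> real (hdeg E v) * (h' v)^2"
        using degs v by (intro mult_right_mono) auto
      ultimately have "(h' v)^2 \<le> 1" using Nh' by simp
      then have "\<bar>h' v\<bar> \<le> 1" by (simp add: abs_square_le_1)
      then have A: "h' v \<le> 1" "- h' v \<le> 1" by (auto dest: abs_le_D1 abs_le_D2)
      have hv: "h' v = h v / r" using v by (simp add: h'_def)
      show "- 1 \<le> h v / r" "h v / r \<le> 1" using A unfolding hv by linarith+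
    qed
    then have "h' \<in> S" using Nh' by (simp add: S_def)
    then have "Qf f0 \<le> Qf h / r^2" using min[of h'] Qh' by simp
    then show ?thesis using r Np by (simp add: le_divide_eq)
  qed
  moreover have "Nf f0 = 1" using f0 by (simp add: S_def)
  ultimately show ?thesis by blast
qed

lemma lam_le:
  assumes Vne: "V \<noteq> {}"
  shows "lambda1 V E * Nf g \<le> Qf g"
proof -
  obtain f0 where f0: "Nf f0 = 1" "\<And>h. Qf f0 * Nf h \<le> Qf h" using exists_min[OF Vne] by blast
  have "is_eigenfunction V E f0 (Qf f0)"
    unfolding is_eigenfunction_def
  proof
    show "\<exists>v\<in>V. f0 v \<noteq> 0"
    proof (rule ccontr)
      assume "\<not> ?thesis"
      then have "Nf f0 = 0" unfolding Nf_def by simp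
      then show False using f0 by simp
    qed
    show "\<forall>v\<in>V. nlap V E f0 v = Qf f0 * f0 v"
      using eig_from_min[of "Qf f0" f0] f0 by simp
  qed
  then have "Qf f0 \<in> {\<mu>. is_eigenvalue V E \<mu>}" by (auto simp: is_eigenvalue_def)
  then have "lambda1 V E \<le> Qf f0" unfolding lambda1_def using fin_eig by (simp add: Min_le)
  then have "lambda1 V E * Nf g \<le> Qf f0 * Nf g" using Nf_nonneg by (simp add: mult_right_mono)
  also have "\<dots> \<le> Qf g" using f0 by simp
  finally show ?thesis .
qed

end

lemma sq_diff_sum:
  fixes a :: "nat \<Rightarrow> real"
  shows "(\<Sum>i<k. \<Sum>j<k. (a i - a j)^2) = 2 * real k * (\<Sum>i<k. (a i)^2) - 2 * (\<Sum>i<k. a i)^2"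
proof -
  define S1 where "S1 = (\<Sum>j<k. a j)"
  define S2 where "S2 = (\<Sum>j<k. (a j)^2)"
  have "(\<Sum>i<k. \<Sum>j<k. (a i - a j)^2) = (\<Sum>i<k. \<Sum>j<k. ((a i)^2 + (a j)^2 - 2 * (a i * a j)))"
    by (intro sum.cong refl) (simp add: power2_diff)
  also have "\<dots> = (\<Sum>i<k. real k * (a i)^2 + S2 - 2 * (a i * S1))"
    unfolding S1_def S2_def by (intro sum.cong refl) (simp add: sum.distrib sum_subtractf sum_distrib_left)
  also have "\<dots> = real k * S2 + real k * S2 - 2 * (S1 * S1)"
    by (simp add: sum.distrib sum_subtractf sum_distrib_left[symmetric] sum_distrib_right[symmetric] S1_def[symmetric] S2_def[symmetric])
  also have "\<dots> = 2 * real k * S2 - 2 * S1^2"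
    by (simp add: power2_eq_square)
  finally show ?thesis unfolding S1_def S2_def .
qed

lemma classes_nonempty:
  fixes cl :: "'a \<Rightarrow> nat"
  assumes tail: "q_tailored V E q k cl" and kk: "k = chi_qt V E q" and i: "i < k"
  shows "color_class V cl i \<noteq> {}"
proof
  assume empty: "color_class V cl i = {}"
  define cl' where "cl' v = (if cl v > i then cl v - 1 else cl v)" for v
  have colk: "\<And>v. v \<in> V \<Longrightarrow> cl v < k" using tail by (auto simp: q_tailored_def is_coloring_def)
  have coli: "\<And>v. v \<in> V \<Longrightarrow> cl v \<noteq> i" using empty by (auto simp: color_class_def)
  have cc: "color_class V cl' i' = color_class V cl (if i' < i then i' else Suc i')" for i'
  proof -
    have "\<forall>v\<in>V. (cl' v = i') = (cl v = (if i' < i then i' else Suc i'))"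
    proof
      fix v assume "v \<in> V"
      then have "cl v \<noteq> i" by (rule coli)
      then show "(cl' v = i') = (cl v = (if i' < i then i' else Suc i'))"
        unfolding cl'_def by auto
    qed
    then show ?thesis unfolding color_class_def by blast
  qed
  have "q_tailored V E q (k - 1) cl'"
    unfolding q_tailored_def
  proof (intro conjI allI impI ballI)
    show "is_coloring V (k - 1) cl'"
      unfolding is_coloring_def
    proof
      fix v assume v: "v \<in> V"
      have "cl v < k" "cl v \<noteq> i" using colk[OF v] coli[OF v] .
      then show "cl' v < k - 1" unfolding cl'_def using i by auto
    qed
    fix i' v assume i': "i' < k - 1" and v: "v \<in> color_class V cl' i'"
    define j where "j = (if i' < i then i' else Suc i')"
    have j: "j < k" using i' i unfolding j_def by auto
    have v': "v \<in> color_class V cl j" using v cc j_def by simp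
    show "(\<Sum>w\<in>color_class V cl' i'. \<bar>hadj E v w\<bar>) \<le> q * real (hdeg E v)"
      using tail j v' unfolding cc j_def[symmetric] q_tailored_def by blast
  qed
  then have "chi_qt V E q \<le> k - 1" unfolding chi_qt_def by (intro Least_le exI)
  then show False using kk i by linarith
qed

context hg begin

lemma hoffman:
  fixes q :: real and k :: nat and cl :: "'a \<Rightarrow> nat"
  assumes Vne: "V \<noteq> {}" and tail: "q_tailored V E q k cl" and k2: "k \<ge> 2"
    and ne: "\<And>i. i < k \<Longrightarrow> color_class V cl i \<noteq> {}"
    and qc: "q \<le> real c - 1"
    and eq: "real k = (real c - lambda1 V E) / (q + 1 - lambda1 V E)"
  shows "(\<forall>i<k. \<forall>v\<in>color_class V cl i.
              (\<Sum>w\<in>color_class V cl i. \<bar>hadj E v w\<bar>) = q * real (hdeg E v))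
         \<and> (\<forall>i<k. \<forall>j<k. i \<noteq> j \<longrightarrow>
              is_eigenfunction V E (gfun V cl i j) (lambda1 V E))
         \<and> lambda1 V E = ((q + 1) * real k - real c) / (real k - 1)"
proof -
  define lam where "lam = lambda1 V E"
  define C where "C i = color_class V cl i" for i
  define X where "X i v = (if v \<in> C i then 1 else 0 :: real)" for i v
  define G where "G i j v = X i v - X j v" for i j v
  define s where "s v = (\<Sum>w\<in>C (cl v). \<bar>hadj E v w\<bar>)" for v
  define D where "D = (\<Sum>v\<in>V. real (hdeg E v))"
  define SL where "SL = (\<Sum>v\<in>V. q * real (hdeg E v) - s v)"
  have memC: "v \<in> C i \<longleftrightarrow> v \<in> V \<and> cl v = i" for v i by (simp add: C_def color_class_def)
  have colk: "\<And>v. v \<in> V \<Longrightarrow> cl v < k" using tail by (auto simp: q_tailored_def is_coloring_def)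
  have tail_v: "s v \<le> q * real (hdeg E v)" if v: "v \<in> V" for v
  proof -
    have "cl v < k" "v \<in> C (cl v)" using colk[OF v] v memC by auto
    then show ?thesis using tail unfolding s_def C_def q_tailored_def by blast
  qed
  have SL_nn: "SL \<ge> 0" unfolding SL_def using tail_v by (intro sum_nonneg) auto
  have XsumF: "(\<Sum>i<k. X i v * F i) = F (cl v)" if v: "v \<in> V" for v and F :: "nat \<Rightarrow> real"
  proof -
    have "(\<Sum>i<k. X i v * F i) = (\<Sum>i<k. if i = cl v then F i else 0)"
      using v by (intro sum.cong refl) (auto simp: X_def memC)
    also have "\<dots> = F (cl v)" using colk[OF v] by simp
    finally show ?thesis .
  qed
  have Xsum: "(\<Sum>i<k. X i v) = 1" if v: "v \<in> V" for v
    using XsumF[OF v, of "\<lambda>_. 1"] by simp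
  have Xsq: "(X i v)^2 = X i v" for i v by (simp add: X_def)
  have D_pos: "D > 0" unfolding D_def using Vne finV deg_pos by (intro sum_pos) auto
  have D_edges: "D = (\<Sum>e\<in>E. real c)"
  proof -
    have "D = (\<Sum>v\<in>V. \<Sum>e\<in>E. if v \<in> e then 1 else 0)"
      unfolding D_def hdeg_def using finE by (simp add: sum_if_card)
    also have "\<dots> = (\<Sum>e\<in>E. \<Sum>v\<in>V. if v \<in> e then 1 else 0)" by (rule sum.swap)
    also have "\<dots> = (\<Sum>e\<in>E. real c)"
    proof (rule sum.cong[OF refl])
      fix e assume e: "e \<in> E"
      have "(\<Sum>v\<in>V. if v \<in> e then 1 else (0::real)) = (\<Sum>v\<in>e. 1)" using sum_edge[OF e, of "\<lambda>_. 1::real"] by simp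
      then show "(\<Sum>v\<in>V. if v \<in> e then 1 else (0::real)) = real c" using edges e by simp
    qed
    finally show ?thesis .
  qed
  define n where "n i e = (\<Sum>v\<in>e. X i v)" for i e
  have nsum: "(\<Sum>i<k. n i e) = real c" if e: "e \<in> E" for e
  proof -
    have "(\<Sum>i<k. n i e) = (\<Sum>v\<in>e. \<Sum>i<k. X i v)" unfolding n_def by (rule sum.swap)
    also have "\<dots> = (\<Sum>v\<in>e. 1)" using edges e Xsum by (intro sum.cong refl) auto
    also have "\<dots> = real c" using edges e by simp
    finally show ?thesis .
  qed
  have QG: "Qf (G i j) = (\<Sum>e\<in>E. (n i e - n j e)^2)" for i j
    unfolding Qf_def G_def n_def by (simp add: sum_subtractf)
  have QX: "Qf (X i) = (\<Sum>e\<in>E. (n i e)^2)" for i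
    unfolding Qf_def n_def by simp
  have QS: "(\<Sum>i<k. \<Sum>j<k. Qf (G i j)) = 2 * real k * (\<Sum>i<k. Qf (X i)) - 2 * real c * D"
  proof -
    have "(\<Sum>i<k. \<Sum>j<k. Qf (G i j)) = (\<Sum>e\<in>E. \<Sum>i<k. \<Sum>j<k. (n i e - n j e)^2)"
      unfolding QG by (subst sum.swap) (simp add: sum.swap[of _ E])
    also have "\<dots> = (\<Sum>e\<in>E. 2 * real k * (\<Sum>i<k. (n i e)^2) - 2 * (real c)^2)"
      using nsum by (intro sum.cong refl) (simp add: sq_diff_sum)
    also have "\<dots> = 2 * real k * (\<Sum>i<k. \<Sum>e\<in>E. (n i e)^2) - 2 * real c * D"
      unfolding D_edges by (simp add: sum_subtractf sum_distrib_left power2_eq_square sum.swap[of _ E] mult.assoc)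
    finally show ?thesis unfolding QX .
  qed
  have TX: "Qf (X i) = (\<Sum>v\<in>V. X i v * (real (hdeg E v) + s v))" for i
  proof -
    have "Qf (X i) = (\<Sum>v\<in>V. \<Sum>w\<in>V. W v w * X i v * X i w)" by (rule Qf_bilin)
    also have "\<dots> = (\<Sum>v\<in>V. X i v * (real (hdeg E v) + s v))"
    proof (rule sum.cong[OF refl])
      fix v assume v: "v \<in> V"
      show "(\<Sum>w\<in>V. W v w * X i v * X i w) = X i v * (real (hdeg E v) + s v)"
      proof (cases "v \<in> C i")
        case False
        then show ?thesis by (simp add: X_def)
      next
        case True
        then have clv: "cl v = i" using memC by auto
        have "(\<Sum>w\<in>V. W v w * X i v * X i w) = (\<Sum>w\<in>V. W v w * X i w)"
          using True by (simp add: X_def)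
        also have "\<dots> = W v v * X i v + (\<Sum>w\<in>V-{v}. W v w * X i w)"
          using sum.remove[OF finV v] by simp
        also have "(\<Sum>w\<in>V-{v}. W v w * X i w) = (\<Sum>w\<in>V-{v}. \<bar>hadj E v w\<bar> * X i w)"
          by (intro sum.cong refl) (auto simp: hadj_W W_def)
        also have "\<dots> = (\<Sum>w\<in>V. \<bar>hadj E v w\<bar> * X i w)"
          using sum.remove[OF finV v, of "\<lambda>w. \<bar>hadj E v w\<bar> * X i w"] by (simp add: hadj_def)
        also have "\<dots> = (\<Sum>w\<in>V. if cl w = i then \<bar>hadj E v w\<bar> else 0)"
          by (intro sum.cong refl) (auto simp: X_def memC)
        also have "\<dots> = s v"
          unfolding s_def clv C_def color_class_def using sum.inter_filter[OF finV, of "\<lambda>w. \<bar>hadj E v w\<bar>" "\<lambda>w. cl w = i"]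
          by simp
        finally show ?thesis using True by (simp add: X_def W_diag)
      qed
    qed
    finally show ?thesis .
  qed
  have TS: "(\<Sum>i<k. Qf (X i)) = D + (\<Sum>v\<in>V. s v)"
  proof -
    have "(\<Sum>i<k. Qf (X i)) = (\<Sum>v\<in>V. \<Sum>i<k. X i v * (real (hdeg E v) + s v))"
      unfolding TX by (rule sum.swap)
    also have "\<dots> = (\<Sum>v\<in>V. real (hdeg E v) + s v)"
      using Xsum by (intro sum.cong refl) (simp add: sum_distrib_right[symmetric])
    finally show ?thesis by (simp add: D_def sum.distrib)
  qed
  have NS: "(\<Sum>i<k. \<Sum>j<k. Nf (G i j)) = 2 * (real k - 1) * D"
  proof -
    have "(\<Sum>i<k. \<Sum>j<k. Nf (G i j)) = (\<Sum>v\<in>V. real (hdeg E v) * (\<Sum>i<k. \<Sum>j<k. (X i v - X j v)^2))"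
      unfolding Nf_def G_def by (simp add: sum_distrib_left sum.swap[of _ V])
    also have "\<dots> = (\<Sum>v\<in>V. real (hdeg E v) * (2 * real k - 2))"
      using Xsum by (intro sum.cong refl) (simp add: sq_diff_sum Xsq)
    also have "\<dots> = D * (2 * real k - 2)" unfolding D_def by (rule sum_distrib_right[symmetric])
    finally show ?thesis by (simp add: algebra_simps)
  qed
  have sS: "(\<Sum>v\<in>V. s v) = q * D - SL"
    unfolding SL_def D_def by (simp add: sum_subtractf sum_distrib_left)
  define F where "F i j = Qf (G i j) - lam * Nf (G i j)" for i j
  have F_nn: "F i j \<ge> 0" for i j unfolding F_def lam_def using lam_le[OF Vne] by simp
  have FS: "(\<Sum>i<k. \<Sum>j<k. F i j) = 2 * (real k * (1 + q) - real c - lam * (real k - 1)) * D - 2 * real k * SL"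
  proof -
    have "(\<Sum>i<k. \<Sum>j<k. F i j) = (\<Sum>i<k. \<Sum>j<k. Qf (G i j)) - lam * (\<Sum>i<k. \<Sum>j<k. Nf (G i j))"
      unfolding F_def by (simp add: sum_subtractf sum_distrib_left)
    also have "\<dots> = 2 * (real k * (1 + q) - real c - lam * (real k - 1)) * D - 2 * real k * SL"
      unfolding QS TS NS sS by (simp add: algebra_simps)
    finally show ?thesis .
  qed
  have FS_nn: "(\<Sum>i<k. \<Sum>j<k. F i j) \<ge> 0" using F_nn by (intro sum_nonneg) auto
  have kpos: "real k \<ge> 2" using k2 by simp
  have ineq: "real k * (1 + q) - real c - lam * (real k - 1) \<ge> 0"
  proof -
    have "2 * real k * SL \<ge> 0" using SL_nn kpos by simp
    then have "(real k * (1 + q) - real c - lam * (real k - 1)) * D \<ge> 0"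
      using FS FS_nn by linarith
    then show ?thesis using D_pos by (simp add: zero_le_mult_iff)
  qed
  have den: "q + 1 - lam > 0"
  proof (rule ccontr)
    assume "\<not> ?thesis"
    then consider "q + 1 - lam = 0" | "q + 1 - lam < 0" by linarith
    then show False
    proof cases
      case 1 then show False using eq kpos by (simp add: lam_def)
    next
      case 2
      then have "lam * (real k - 1) > (q + 1) * (real k - 1)" using kpos
        by (intro mult_strict_right_mono) auto
      then show False using ineq qc by (simp add: algebra_simps)
    qed
  qed
  have lam_eq: "lam * (real k - 1) = real k * (1 + q) - real c"
  proof -
    have "real k * (q + 1 - lam) = real c - lam" using eq den by (simp add: lam_def field_simps)
    then show ?thesis by (simp add: algebra_simps)
  qed
  have "(\<Sum>i<k. \<Sum>j<k. F i j) = - 2 * real k * SL" unfolding FS lam_eq by simp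
  then have SL0: "SL = 0" and FS0: "(\<Sum>i<k. \<Sum>j<k. F i j) = 0"
    using FS_nn SL_nn kpos by (auto simp: mult_le_0_iff)
  have slack0: "\<forall>v\<in>V. q * real (hdeg E v) - s v = 0"
    using SL0 unfolding SL_def using finV tail_v by (subst (asm) sum_nonneg_eq_0_iff) auto
  have c1: "\<forall>i<k. \<forall>v\<in>color_class V cl i.
              (\<Sum>w\<in>color_class V cl i. \<bar>hadj E v w\<bar>) = q * real (hdeg E v)"
  proof (intro allI impI ballI)
    fix i v assume "i < k" "v \<in> color_class V cl i"
    then have v: "v \<in> V" "cl v = i" using memC C_def by auto
    then show "(\<Sum>w\<in>color_class V cl i. \<bar>hadj E v w\<bar>) = q * real (hdeg E v)"
      using slack0 unfolding s_def C_def by auto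
  qed
  have Fij0: "F i j = 0" if "i < k" "j < k" for i j
  proof -
    have "\<forall>i\<in>{..<k}. (\<Sum>j<k. F i j) = 0"
      using FS0 F_nn by (subst (asm) sum_nonneg_eq_0_iff) (auto intro: sum_nonneg)
    then have "(\<Sum>j<k. F i j) = 0" using that by auto
    then show ?thesis using F_nn that by (subst (asm) sum_nonneg_eq_0_iff) auto
  qed
  have c2: "\<forall>i<k. \<forall>j<k. i \<noteq> j \<longrightarrow> is_eigenfunction V E (gfun V cl i j) (lambda1 V E)"
  proof (intro allI impI)
    fix i j assume ij: "i < k" "j < k" "i \<noteq> j"
    have gG: "gfun V cl i j = G i j"
      using ij by (auto simp: gfun_def G_def X_def C_def color_class_def fun_eq_iff)
    obtain v where v: "v \<in> C i" using ne[OF ij(1)] C_def by auto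
    then have vV: "v \<in> V" using memC by auto
    have G1: "G i j v = 1" using v ij memC by (auto simp: G_def X_def)
    have nz: "\<exists>v\<in>V. G i j v \<noteq> 0"
    proof (rule bexI[OF _ vV])
      show "G i j v \<noteq> 0" using G1 by simp
    qed
    have "lam * Nf (G i j) = Qf (G i j)" using Fij0[OF ij(1,2)] by (simp add: F_def)
    then have "\<forall>v\<in>V. nlap V E (G i j) v = lam * G i j v"
      using eig_from_min[of lam "G i j"] lam_le[OF Vne] unfolding lam_def by blast
    then show "is_eigenfunction V E (gfun V cl i j) (lambda1 V E)"
      using nz unfolding gG is_eigenfunction_def lam_def by blast
  qed
  have c3: "lambda1 V E = ((q + 1) * real k - real c) / (real k - 1)"
    using lam_eq kpos unfolding lam_def by (simp add: field_simps)
  show ?thesis using c1 c2 c3 by blast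
qed

end

theorem mainTheorem12:
  fixes V :: "'a set" and E :: "'a set set" and c :: nat and q :: real
  assumes "c \<ge> 2" and "0 \<le> q" and "q \<le> real c - 1"
    and "finite V" and "\<forall>e\<in>E. e \<subseteq> V \<and> card e = c"
    and "E \<noteq> {}" and "\<forall>v\<in>V. hdeg E v \<ge> 1"
    and "chi_qt V E q \<ge> 2"
    and "real (chi_qt V E q) = (real c - lambda1 V E) / (q + 1 - lambda1 V E)"
  shows "\<forall>col. q_tailored V E q (chi_qt V E q) col \<longrightarrow>
           (\<forall>i<chi_qt V E q. \<forall>v\<in>color_class V col i.
              (\<Sum>w\<in>color_class V col i. \<bar>hadj E v w\<bar>) = q * real (hdeg E v))
         \<and> (\<forall>i<chi_qt V E q. \<forall>j<chi_qt V E q. i \<noteq> j \<longrightarrow>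
              is_eigenfunction V E (gfun V col i j) (lambda1 V E))
         \<and> lambda1 V E = ((q + 1) * real (chi_qt V E q) - real c) / (real (chi_qt V E q) - 1)"
proof -
  interpret hg V E c using assms(4,5,7) by unfold_locales auto
  obtain e where e: "e \<in> E" using assms(6) by auto
  have "card e = c" "e \<subseteq> V" using assms(5) e by auto
  then have Vne: "V \<noteq> {}" using assms(1) by auto
  show ?thesis
  proof (intro allI impI)
    fix cl assume tl: "q_tailored V E q (chi_qt V E q) cl"
    show "(\<forall>i<chi_qt V E q. \<forall>v\<in>color_class V cl i.
              (\<Sum>w\<in>color_class V cl i. \<bar>hadj E v w\<bar>) = q * real (hdeg E v))
         \<and> (\<forall>i<chi_qt V E q. \<forall>j<chi_qt V E q. i \<noteq> j \<longrightarrow>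
              is_eigenfunction V E (gfun V cl i j) (lambda1 V E))
         \<and> lambda1 V E = ((q + 1) * real (chi_qt V E q) - real c) / (real (chi_qt V E q) - 1)"
      by (rule hoffman[OF Vne tl assms(8) classes_nonempty[OF tl refl] assms(3) assms(9)])
  qed
qed

end
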